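(* Let $n\ge 2$, $k\ge 1$, $M_1\in\mathbb N^+$ and $\mathbf C=(c_0,\dots,c_k)\in\{0,1\}^{k+1}$, and let $\gamma$ be Euler's constant. Let $P(O_{\mathbf C}(n,m+c_k-1))=O_{\mathbf C}(n,m+c_k-1)/n!^k$. (i) If $c_0=0$ and $M=\left\lceil ekc_1(\log(n-1)+\gamma)+\frac{e\pi^2}{6}\sum_{\beta=2}^k c_\beta\binom{k}{\beta}\right\rceil+M_1$, then $$\sum_{m=M+1}^{n}P(O_{\mathbf C}(n,m+c_k-1))\le \exp(-M_1).$$ (ii) If $c_0=1$ and $M'=\left\lceil ekc'_1(\log(n-1)+\gamma)+\frac{e\pi^2}{6}\sum_{\beta=2}^k c'_\beta\binom{k}{\beta}\right\rceil+M_1$, then $$\sum_{1\le m< n+1-M'}P(O_{\mathbf C}(n,m+c_k-1))\le \exp(-M_1).$$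
   Context: Fix integers $k\ge 1$, $n\ge 1$ and $\mathbf C=(c_0,\dots,c_k)\in\{0,1\}^{k+1}$; put $\mathbf C'=(1,\dots,1)-\mathbf C=(c'_0,\dots,c'_k)$. Consider $k$-tuples $(\pi_1,\dots,\pi_k)$ of permutations of $\{1,\dots,n\}$ (there are $n!^k$). A position $\alpha$ is a record of a permutation $\pi$ if $\pi(\alpha)<\pi(\alpha')$ for every $\alpha'<\alpha$ (position $1$ is always a record); equivalently records index the minimal elements of the points $(\alpha,\pi(\alpha))$ under strict componentwise domination. For a tuple, let $l_\alpha$ be the number of $\beta\in\{1,\dots,k\}$ for which $\alpha$ is a record of $\pi_\beta$. The $\mathbf C$ sequential optimization set of the tuple is $S=\{\alpha:c_{l_\alpha}=1\}$, with weight $|S|$. For an integer $m$, $O_{\mathbf C}(n,m)$ is the number of $k$-tuples whose weight equals $m$. Thus $\sum_{m>M}P(O_{\mathbf C}(n,m+c_k-1))$ is the probability that a uniformly random $k$-tuple has weight $>M+c_k-1$. $\log$ is the natural logarithm. *)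

theory Defs
  imports "HOL-Analysis.Analysis" "HOL-Combinatorics.Permutations"
begin

definition is_record :: "(nat \<Rightarrow> nat) \<Rightarrow> nat \<Rightarrow> bool" where
  "is_record p a \<longleftrightarrow> (\<forall>a'. 1 \<le> a' \<and> a' < a \<longrightarrow> p a < p a')"

definition perm_tuples :: "nat \<Rightarrow> nat \<Rightarrow> (nat \<Rightarrow> nat \<Rightarrow> nat) set" where
  "perm_tuples k n = (\<Pi>\<^sub>E \<beta>\<in>{1..k}. {p. p permutes {1..n}})"

definition rec_count :: "nat \<Rightarrow> (nat \<Rightarrow> nat \<Rightarrow> nat) \<Rightarrow> nat \<Rightarrow> nat" where
  "rec_count k \<pi> a = card {\<beta>\<in>{1..k}. is_record (\<pi> \<beta>) a}"

definition seq_opt_set :: "(nat \<Rightarrow> nat) \<Rightarrow> nat \<Rightarrow> nat \<Rightarrow> (nat \<Rightarrow> nat \<Rightarrow> nat) \<Rightarrow> nat set" where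
  "seq_opt_set c k n \<pi> = {a\<in>{1..n}. c (rec_count k \<pi> a) = 1}"

definition weight :: "(nat \<Rightarrow> nat) \<Rightarrow> nat \<Rightarrow> nat \<Rightarrow> (nat \<Rightarrow> nat \<Rightarrow> nat) \<Rightarrow> nat" where
  "weight c k n \<pi> = card (seq_opt_set c k n \<pi>)"

definition O_C :: "(nat \<Rightarrow> nat) \<Rightarrow> nat \<Rightarrow> nat \<Rightarrow> int \<Rightarrow> nat" where
  "O_C c k n m = card {\<pi>\<in>perm_tuples k n. int (weight c k n \<pi>) = m}"

definition P_O :: "(nat \<Rightarrow> nat) \<Rightarrow> nat \<Rightarrow> nat \<Rightarrow> int \<Rightarrow> real" where
  "P_O c k n m = real (O_C c k n m) / real (fact n) ^ k"

end

theory Submission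
  imports Defs
begin

definition shrink :: "(nat \<Rightarrow> nat) \<Rightarrow> nat \<Rightarrow> nat \<Rightarrow> nat" where
  "shrink p m a = (if 1 \<le> a \<and> a \<le> m then (if p a < p (Suc m) then p a else p a - 1) else a)"

lemma perm_val:
  assumes "p permutes {1..Suc m}" "1 \<le> a" "a \<le> Suc m"
  shows "1 \<le> p a \<and> p a \<le> Suc m"
  using permutes_in_image[OF assms(1), of a] assms by auto

lemma perm_ne:
  assumes "p permutes {1..Suc m}" "a \<noteq> b"
  shows "p a \<noteq> p b"
  using permutes_inj[OF assms(1)] assms(2) by (metis injD)

lemma shrink_permutes:
  assumes p: "p permutes {1..Suc m}"
  shows "shrink p m permutes {1..m}"
proof -
  let ?f = "shrink p m"
  have v: "1 \<le> p (Suc m) \<and> p (Suc m) \<le> Suc m" using perm_val[OF p] by simp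
  have img: "?f ` {1..m} \<subseteq> {1..m}"
  proof
    fix y assume "y \<in> ?f ` {1..m}"
    then obtain a where a: "a \<in> {1..m}" "y = ?f a" by auto
    have "p a \<noteq> p (Suc m)" using perm_ne[OF p] a by auto
    moreover have "1 \<le> p a \<and> p a \<le> Suc m" using perm_val[OF p] a by auto
    ultimately show "y \<in> {1..m}" using a v by (auto simp: shrink_def)
  qed
  have inj: "inj_on ?f {1..m}"
  proof
    fix a b assume a: "a \<in> {1..m}" and b: "b \<in> {1..m}" and e: "?f a = ?f b"
    have "p a \<noteq> p (Suc m)" "p b \<noteq> p (Suc m)" using perm_ne[OF p] a b by auto
    then have "p a = p b" using e a b by (auto simp: shrink_def split: if_splits)
    then show "a = b" using permutes_inj[OF p] by (metis injD)
  qed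
  have "?f ` {1..m} = {1..m}" using inj img by (simp add: endo_inj_surj)
  then have "bij_betw ?f {1..m} {1..m}" using inj by (simp add: bij_betw_def)
  moreover have "\<forall>x. x \<notin> {1..m} \<longrightarrow> ?f x = x" by (auto simp: shrink_def)
  ultimately show ?thesis by (intro bij_imp_permutes) auto
qed

lemma shrink_record:
  assumes p: "p permutes {1..Suc m}" and "a \<le> m"
  shows "is_record (shrink p m) a \<longleftrightarrow> is_record p a"
proof -
  have "shrink p m a < shrink p m a' \<longleftrightarrow> p a < p a'" if "1 \<le> a'" "a' < a" for a'
  proof -
    have "p a \<noteq> p (Suc m)" "p a' \<noteq> p (Suc m)" using perm_ne[OF p] that assms by auto
    then show ?thesis using that assms by (auto simp: shrink_def)
  qed
  then show ?thesis unfolding is_record_def by auto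
qed

lemma last_record:
  assumes p: "p permutes {1..Suc m}"
  shows "is_record p (Suc m) \<longleftrightarrow> p (Suc m) = 1"
proof
  assume r: "is_record p (Suc m)"
  have "1 \<in> p ` {1..Suc m}" using permutes_image[OF p] by auto
  then obtain a where a: "a \<in> {1..Suc m}" "p a = 1" by auto
  show "p (Suc m) = 1"
  proof (rule ccontr)
    assume ne: "p (Suc m) \<noteq> 1"
    then have "a \<noteq> Suc m" using a by auto
    then have "a < Suc m" using a by auto
    then have "p (Suc m) < p a" using r a unfolding is_record_def by auto
    moreover have "1 \<le> p (Suc m)" using perm_val[OF p, of "Suc m"] by simp
    ultimately show False using a by simp
  qed
next
  assume e: "p (Suc m) = 1"
  show "is_record p (Suc m)" unfolding is_record_def
  proof (intro allI impI)
    fix a' assume a': "1 \<le> a' \<and> a' < Suc m"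
    have "p a' \<noteq> 1" using perm_ne[OF p, of a' "Suc m"] a' e by auto
    moreover have "1 \<le> p a'" using perm_val[OF p, of a'] a' by auto
    ultimately show "p (Suc m) < p a'" using e by auto
  qed
qed

lemma shrink_inj:
  assumes p: "p permutes {1..Suc m}" and q: "q permutes {1..Suc m}"
    and e1: "p (Suc m) = q (Suc m)" and e2: "shrink p m = shrink q m"
  shows "p = q"
proof
  fix a
  show "p a = q a"
  proof (cases "a \<in> {1..m}")
    case True
    have "p a \<noteq> p (Suc m)" "q a \<noteq> q (Suc m)" using perm_ne[OF p] perm_ne[OF q] True by auto
    moreover have "shrink p m a = shrink q m a" using e2 by simp
    ultimately show ?thesis using True e1 by (auto simp: shrink_def split: if_splits)
  next
    case False
    show ?thesis
    proof (cases "a = Suc m")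
      case True then show ?thesis using e1 by simp
    next
      case F2: False
      then have "a \<notin> {1..Suc m}" using False by auto
      then show ?thesis using permutes_not_in[OF p] permutes_not_in[OF q] by metis
    qed
  qed
qed

lemma card_PT: "card (perm_tuples k n) = fact n ^ k"
  unfolding perm_tuples_def by (simp add: card_PiE card_permutations)

lemma finite_PT: "finite (perm_tuples k n)"
  unfolding perm_tuples_def by (intro finite_PiE) (auto simp: finite_permutations)

definition Phi :: "nat \<Rightarrow> nat \<Rightarrow> (nat \<Rightarrow> nat \<Rightarrow> nat) \<Rightarrow> (nat \<Rightarrow> nat) \<times> (nat \<Rightarrow> nat \<Rightarrow> nat)" where
  "Phi k m P = (restrict (\<lambda>\<beta>. P \<beta> (Suc m)) {1..k}, restrict (\<lambda>\<beta>. shrink (P \<beta>) m) {1..k})"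

lemma Phi_bij:
  "bij_betw (Phi k m) (perm_tuples k (Suc m))
     ((\<Pi>\<^sub>E \<beta>\<in>{1..k}. {1..Suc m}) \<times> perm_tuples k m)"
proof -
  let ?T = "(\<Pi>\<^sub>E \<beta>\<in>{1..k}. {1..Suc m}) \<times> perm_tuples k m"
  have inj: "inj_on (Phi k m) (perm_tuples k (Suc m))"
  proof
    fix P Q assume P: "P \<in> perm_tuples k (Suc m)" and Q: "Q \<in> perm_tuples k (Suc m)"
      and e: "Phi k m P = Phi k m Q"
    show "P = Q"
    proof (rule PiE_ext[OF P[unfolded perm_tuples_def] Q[unfolded perm_tuples_def]])
      fix \<beta> assume b: "\<beta> \<in> {1..k}"
      have pp: "P \<beta> permutes {1..Suc m}" "Q \<beta> permutes {1..Suc m}"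
        using P Q b unfolding perm_tuples_def by auto
      have "fst (Phi k m P) \<beta> = fst (Phi k m Q) \<beta>" using e by simp
      then have "P \<beta> (Suc m) = Q \<beta> (Suc m)" using b by (simp add: Phi_def)
      moreover have "snd (Phi k m P) \<beta> = snd (Phi k m Q) \<beta>" using e by simp
      then have "shrink (P \<beta>) m = shrink (Q \<beta>) m" using b by (simp add: Phi_def)
      ultimately show "P \<beta> = Q \<beta>" using shrink_inj[OF pp] by blast
    qed
  qed
  have sub: "Phi k m ` perm_tuples k (Suc m) \<subseteq> ?T"
  proof
    fix x assume "x \<in> Phi k m ` perm_tuples k (Suc m)"
    then obtain P where P: "P \<in> perm_tuples k (Suc m)" "x = Phi k m P" by auto
    have pp: "\<And>\<beta>. \<beta> \<in> {1..k} \<Longrightarrow> P \<beta> permutes {1..Suc m}" using P unfolding perm_tuples_def by auto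
    have a: "restrict (\<lambda>\<beta>. P \<beta> (Suc m)) {1..k} \<in> (\<Pi>\<^sub>E \<beta>\<in>{1..k}. {1..Suc m})"
    proof (rule restrict_PiE_iff[THEN iffD2], intro ballI)
      fix \<beta> assume "\<beta> \<in> {1..k}"
      then show "P \<beta> (Suc m) \<in> {1..Suc m}" using perm_val[OF pp, of \<beta> "Suc m"] by simp
    qed
    have b: "restrict (\<lambda>\<beta>. shrink (P \<beta>) m) {1..k} \<in> perm_tuples k m"
      unfolding perm_tuples_def
    proof (rule restrict_PiE_iff[THEN iffD2], intro ballI)
      fix \<beta> assume "\<beta> \<in> {1..k}"
      then show "shrink (P \<beta>) m \<in> {p. p permutes {1..m}}" using shrink_permutes[OF pp] by simp
    qed
    show "x \<in> ?T" unfolding P(2) Phi_def using a b by simp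
  qed
  have fin: "finite ?T" using finite_PT by (auto intro!: finite_PiE)
  have "card ?T = fact (Suc m) ^ k"
    by (simp add: card_cartesian_product card_PiE card_PT power_mult_distrib[symmetric])
  then have "card (Phi k m ` perm_tuples k (Suc m)) = card ?T"
    using card_image[OF inj] card_PT by simp
  then have "Phi k m ` perm_tuples k (Suc m) = ?T" using card_subset_eq[OF fin sub] by simp
  then show ?thesis using inj by (simp add: bij_betw_def)
qed

lemma rec_shrink:
  assumes P: "P \<in> perm_tuples k (Suc m)" and a: "\<alpha> \<le> m"
  shows "rec_count k P \<alpha> = rec_count k (snd (Phi k m P)) \<alpha>"
proof -
  have "{\<beta>\<in>{1..k}. is_record (P \<beta>) \<alpha>} = {\<beta>\<in>{1..k}. is_record (snd (Phi k m P) \<beta>) \<alpha>}"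
  proof (rule Collect_cong)
    fix \<beta>
    show "(\<beta> \<in> {1..k} \<and> is_record (P \<beta>) \<alpha>) = (\<beta> \<in> {1..k} \<and> is_record (snd (Phi k m P) \<beta>) \<alpha>)"
    proof (cases "\<beta> \<in> {1..k}")
      case True
      then have pp: "P \<beta> permutes {1..Suc m}" using P unfolding perm_tuples_def by auto
      show ?thesis using True shrink_record[OF pp a] by (simp add: Phi_def)
    qed auto
  qed
  then show ?thesis unfolding rec_count_def by simp
qed

lemma rec_last:
  assumes P: "P \<in> perm_tuples k (Suc m)"
  shows "rec_count k P (Suc m) = card {\<beta>\<in>{1..k}. fst (Phi k m P) \<beta> = 1}"
proof -
  have "{\<beta>\<in>{1..k}. is_record (P \<beta>) (Suc m)} = {\<beta>\<in>{1..k}. fst (Phi k m P) \<beta> = 1}"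
  proof (rule Collect_cong)
    fix \<beta>
    show "(\<beta> \<in> {1..k} \<and> is_record (P \<beta>) (Suc m)) = (\<beta> \<in> {1..k} \<and> fst (Phi k m P) \<beta> = 1)"
    proof (cases "\<beta> \<in> {1..k}")
      case True
      then have pp: "P \<beta> permutes {1..Suc m}" using P unfolding perm_tuples_def by auto
      show ?thesis using True last_record[OF pp] by (simp add: Phi_def)
    qed auto
  qed
  then show ?thesis unfolding rec_count_def by simp
qed

lemma main_sum:
  fixes h :: "nat \<Rightarrow> real" and B :: "nat \<Rightarrow> real"
  assumes n: "n \<ge> 1" and hpos: "\<And>j. h j \<ge> 0"
    and Bnd: "\<And>\<alpha>. 2 \<le> \<alpha> \<Longrightarrow>
       (\<Sum>v\<in>(\<Pi>\<^sub>E \<beta>\<in>{1..k}. {1..\<alpha>}). h (card {\<beta>\<in>{1..k}. v \<beta> = 1})) \<le> real \<alpha> ^ k * B \<alpha>"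
  shows "(\<Sum>P\<in>perm_tuples k n. \<Prod>\<alpha>\<in>{2..n}. h (rec_count k P \<alpha>))
          \<le> real (fact n) ^ k * (\<Prod>\<alpha>\<in>{2..n}. B \<alpha>)"
  using n
proof (induction n rule: nat_induct_at_least)
  case base
  show ?case by (simp add: card_PT)
next
  case (Suc m)
  let ?V = "\<Pi>\<^sub>E \<beta>\<in>{1..k}. {1..Suc m}"
  let ?H = "\<lambda>v. h (card {\<beta>\<in>{1..k}. v \<beta> = 1})"
  let ?F = "\<lambda>Q. \<Prod>\<alpha>\<in>{2..m}. h (rec_count k Q \<alpha>)"
  have step: "(\<Prod>\<alpha>\<in>{2..Suc m}. h (rec_count k P \<alpha>)) = ?F (snd (Phi k m P)) * ?H (fst (Phi k m P))"
    if P: "P \<in> perm_tuples k (Suc m)" for P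
  proof -
    have "{2..Suc m} = insert (Suc m) {2..m}" using Suc.hyps by auto
    then have "(\<Prod>\<alpha>\<in>{2..Suc m}. h (rec_count k P \<alpha>)) = h (rec_count k P (Suc m)) * (\<Prod>\<alpha>\<in>{2..m}. h (rec_count k P \<alpha>))"
      by simp
    also have "(\<Prod>\<alpha>\<in>{2..m}. h (rec_count k P \<alpha>)) = ?F (snd (Phi k m P))"
      using rec_shrink[OF P] by (intro prod.cong) auto
    finally show ?thesis using rec_last[OF P] by simp
  qed
  have "(\<Sum>P\<in>perm_tuples k (Suc m). \<Prod>\<alpha>\<in>{2..Suc m}. h (rec_count k P \<alpha>))
      = (\<Sum>P\<in>perm_tuples k (Suc m). (\<lambda>x. ?F (snd x) * ?H (fst x)) (Phi k m P))"
    using step by (intro sum.cong) auto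
  also have "\<dots> = (\<Sum>x\<in>?V \<times> perm_tuples k m. ?F (snd x) * ?H (fst x))"
    by (rule sum.reindex_bij_betw[OF Phi_bij])
  also have "\<dots> = (\<Sum>v\<in>?V. \<Sum>Q\<in>perm_tuples k m. ?H v * ?F Q)"
    by (simp add: sum.cartesian_product mult.commute split_beta)
  also have "\<dots> = (\<Sum>v\<in>?V. ?H v) * (\<Sum>Q\<in>perm_tuples k m. ?F Q)"
    by (simp add: sum_product)
  also have "\<dots> \<le> (real (Suc m) ^ k * B (Suc m)) * (real (fact m) ^ k * (\<Prod>\<alpha>\<in>{2..m}. B \<alpha>))"
  proof (rule mult_mono)
    show "(\<Sum>v\<in>?V. ?H v) \<le> real (Suc m) ^ k * B (Suc m)" using Bnd[of "Suc m"] Suc.hyps by simp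
    show "(\<Sum>Q\<in>perm_tuples k m. ?F Q) \<le> real (fact m) ^ k * (\<Prod>\<alpha>\<in>{2..m}. B \<alpha>)" by (rule Suc.IH)
    show "0 \<le> real (Suc m) ^ k * B (Suc m)"
    proof -
      have "0 \<le> (\<Sum>v\<in>?V. ?H v)" using hpos by (intro sum_nonneg) auto
      then show ?thesis using Bnd[of "Suc m"] Suc.hyps by linarith
    qed
    show "0 \<le> (\<Sum>Q\<in>perm_tuples k m. ?F Q)" using hpos by (intro sum_nonneg prod_nonneg) auto
  qed
  also have "\<dots> = real (fact (Suc m)) ^ k * (\<Prod>\<alpha>\<in>{2..Suc m}. B \<alpha>)"
  proof -
    have "{2..Suc m} = insert (Suc m) {2..m}" using Suc.hyps by auto
    then have "(\<Prod>\<alpha>\<in>{2..Suc m}. B \<alpha>) = B (Suc m) * (\<Prod>\<alpha>\<in>{2..m}. B \<alpha>)" by simp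
    moreover have "real (fact (Suc m)) ^ k = real (Suc m) ^ k * real (fact m) ^ k"
      by (simp add: power_mult_distrib[symmetric] algebra_simps)
    ultimately show ?thesis by (simp only: mult_ac)
  qed
  finally show ?case .
qed

lemma card_W:
  assumes S: "S \<subseteq> {1..k}" and a: "\<alpha> \<ge> 1"
  shows "card {v\<in>(\<Pi>\<^sub>E \<beta>\<in>{1..k}. {1..\<alpha>}). \<forall>b\<in>S. v b = 1} = \<alpha> ^ (k - card S)"
proof -
  have eq: "{v\<in>(\<Pi>\<^sub>E \<beta>\<in>{1..k}. {1..\<alpha>}). \<forall>b\<in>S. v b = 1}
        = (\<Pi>\<^sub>E b\<in>{1..k}. if b \<in> S then {1} else {1..\<alpha>})"
  proof (rule set_eqI)
    fix v
    show "v \<in> {v\<in>(\<Pi>\<^sub>E \<beta>\<in>{1..k}. {1..\<alpha>}). \<forall>b\<in>S. v b = 1} \<longleftrightarrow>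
          v \<in> (\<Pi>\<^sub>E b\<in>{1..k}. if b \<in> S then {1} else {1..\<alpha>})"
    proof
      assume v: "v \<in> {v\<in>(\<Pi>\<^sub>E \<beta>\<in>{1..k}. {1..\<alpha>}). \<forall>b\<in>S. v b = 1}"
      show "v \<in> (\<Pi>\<^sub>E b\<in>{1..k}. if b \<in> S then {1} else {1..\<alpha>})"
        unfolding PiE_iff using v by (auto simp: PiE_iff)
    next
      assume v: "v \<in> (\<Pi>\<^sub>E b\<in>{1..k}. if b \<in> S then {1} else {1..\<alpha>})"
      have "v i \<in> {1..\<alpha>}" if "i \<in> {1..k}" for i
        using v that a unfolding PiE_iff by (cases "i \<in> S") force+
      moreover have "v b = 1" if "b \<in> S" for b
        using v that S unfolding PiE_iff by force
      ultimately show "v \<in> {v\<in>(\<Pi>\<^sub>E \<beta>\<in>{1..k}. {1..\<alpha>}). \<forall>b\<in>S. v b = 1}"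
        using v unfolding PiE_iff by auto
    qed
  qed
  have "card (\<Pi>\<^sub>E b\<in>{1..k}. if b \<in> S then {1} else {1..\<alpha>})
      = (\<Prod>b\<in>{1..k}. if b \<in> S then 1 else \<alpha>)"
    by (simp add: card_PiE) (intro prod.cong, auto)
  also have "\<dots> = \<alpha> ^ card ({1..k} - S)"
  proof -
    have "(\<Prod>b\<in>{1..k}. if b \<in> S then 1 else \<alpha>) = (\<Prod>b\<in>{1..k} - S. \<alpha>)"
      by (subst prod.If_cases) (auto simp: Diff_eq)
    then show ?thesis by simp
  qed
  also have "card ({1..k} - S) = k - card S"
    using S by (simp add: card_Diff_subset finite_subset)
  finally show ?thesis using eq by simp
qed

lemma count_bound:
  fixes d :: "nat \<Rightarrow> nat"
  assumes d0: "d 0 \<noteq> 1" and a: "\<alpha> \<ge> 1"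
  shows "real (card {v\<in>(\<Pi>\<^sub>E \<beta>\<in>{1..k}. {1..\<alpha>}). d (card {\<beta>\<in>{1..k}. v \<beta> = 1}) = 1})
     \<le> (\<Sum>\<beta>=1..k. real (d \<beta>) * real (k choose \<beta>) * real \<alpha> ^ (k - \<beta>))"
proof -
  let ?V = "\<Pi>\<^sub>E \<beta>\<in>{1..k}. {1..\<alpha>}"
  let ?W = "\<lambda>S. {v\<in>?V. \<forall>b\<in>S. v b = 1}"
  let ?D = "{\<beta>\<in>{1..k}. d \<beta> = 1}"
  let ?Sb = "\<lambda>\<beta>. {S. S \<subseteq> {1..k} \<and> card S = \<beta>}"
  have sub: "{v\<in>?V. d (card {\<beta>\<in>{1..k}. v \<beta> = 1}) = 1} \<subseteq> (\<Union>\<beta>\<in>?D. \<Union>S\<in>?Sb \<beta>. ?W S)"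
  proof
    fix v assume v: "v \<in> {v\<in>?V. d (card {\<beta>\<in>{1..k}. v \<beta> = 1}) = 1}"
    let ?S = "{\<beta>\<in>{1..k}. v \<beta> = 1}"
    have "?S \<subseteq> {1..k}" by auto
    then have "card ?S \<le> card {1..k}" by (intro card_mono) auto
    then have "card ?S \<le> k" by simp
    moreover have c0: "card ?S \<noteq> 0"
    proof
      assume "card ?S = 0"
      moreover have "d (card ?S) = 1" using v by simp
      ultimately show False using d0 by metis
    qed
    ultimately have c12: "1 \<le> card ?S" "card ?S \<le> k" by linarith+
    have c3: "d (card ?S) = 1" using v by simp
    have "card ?S \<in> ?D" using c12 c3 by (simp only: mem_Collect_eq atLeastAtMost_iff)
    moreover have "?S \<in> ?Sb (card ?S)" by auto
    moreover have "v \<in> ?W ?S" using v by auto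
    ultimately show "v \<in> (\<Union>\<beta>\<in>?D. \<Union>S\<in>?Sb \<beta>. ?W S)" by blast
  qed
  have finV: "finite ?V" by (intro finite_PiE) auto
  have "card {v\<in>?V. d (card {\<beta>\<in>{1..k}. v \<beta> = 1}) = 1} \<le> card (\<Union>\<beta>\<in>?D. \<Union>S\<in>?Sb \<beta>. ?W S)"
    using sub finV by (intro card_mono) auto
  also have "\<dots> \<le> (\<Sum>\<beta>\<in>?D. card (\<Union>S\<in>?Sb \<beta>. ?W S))"
    by (rule card_UN_le) auto
  also have "\<dots> \<le> (\<Sum>\<beta>\<in>?D. \<Sum>S\<in>?Sb \<beta>. card (?W S))"
  proof (rule sum_mono)
    fix \<beta> assume "\<beta> \<in> ?D"
    have "finite (?Sb \<beta>)" by (rule finite_subset[of _ "Pow {1..k}"]) auto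
    then show "card (\<Union>S\<in>?Sb \<beta>. ?W S) \<le> (\<Sum>S\<in>?Sb \<beta>. card (?W S))"
      by (rule card_UN_le)
  qed
  also have "\<dots> = (\<Sum>\<beta>\<in>?D. (k choose \<beta>) * \<alpha> ^ (k - \<beta>))"
  proof (rule sum.cong[OF refl])
    fix \<beta> assume "\<beta> \<in> ?D"
    have "(\<Sum>S\<in>?Sb \<beta>. card (?W S)) = (\<Sum>S\<in>?Sb \<beta>. \<alpha> ^ (k - \<beta>))"
      using card_W a by (intro sum.cong) auto
    also have "\<dots> = (k choose \<beta>) * \<alpha> ^ (k - \<beta>)"
      using n_subsets[of "{1..k}" \<beta>] by simp
    finally show "(\<Sum>S\<in>?Sb \<beta>. card (?W S)) = (k choose \<beta>) * \<alpha> ^ (k - \<beta>)" .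
  qed
  finally have c: "card {v\<in>?V. d (card {\<beta>\<in>{1..k}. v \<beta> = 1}) = 1}
      \<le> (\<Sum>\<beta>\<in>?D. (k choose \<beta>) * \<alpha> ^ (k - \<beta>))" .
  have "real (card {v\<in>?V. d (card {\<beta>\<in>{1..k}. v \<beta> = 1}) = 1})
      \<le> real (\<Sum>\<beta>\<in>?D. (k choose \<beta>) * \<alpha> ^ (k - \<beta>))"
    using c by (simp only: of_nat_le_iff)
  also have "\<dots> = (\<Sum>\<beta>\<in>?D. real (k choose \<beta>) * real \<alpha> ^ (k - \<beta>))"
    by simp
  also have "\<dots> = (\<Sum>\<beta>\<in>{1..k}. if d \<beta> = 1 then real (k choose \<beta>) * real \<alpha> ^ (k - \<beta>) else 0)"
    by (rule sum.inter_filter) auto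
  also have "\<dots> \<le> (\<Sum>\<beta>=1..k. real (d \<beta>) * real (k choose \<beta>) * real \<alpha> ^ (k - \<beta>))"
    by (intro sum_mono) auto
  finally show ?thesis .
qed

lemma real_card_filter: "finite A \<Longrightarrow> real (card {x\<in>A. P x}) = (\<Sum>x\<in>A. if P x then 1 else 0)"
proof -
  assume A: "finite A"
  have "real (card {x\<in>A. P x}) = (\<Sum>x\<in>{x\<in>A. P x}. 1)" by simp
  also have "\<dots> = (\<Sum>x\<in>A. if P x then 1 else 0)" by (rule sum.inter_filter[OF A])
  finally show ?thesis .
qed

lemma pos_bound:
  fixes d :: "nat \<Rightarrow> nat"
  assumes d0: "d 0 \<noteq> 1" and a: "\<alpha> \<ge> 1"
  shows "(\<Sum>v\<in>(\<Pi>\<^sub>E \<beta>\<in>{1..k}. {1..\<alpha>}). exp (if d (card {\<beta>\<in>{1..k}. v \<beta> = 1}) = 1 then 1 else 0))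
     \<le> real \<alpha> ^ k * exp ((exp 1 - 1) * (\<Sum>\<beta>=1..k. real (d \<beta>) * real (k choose \<beta>) / real \<alpha> ^ \<beta>))"
proof -
  let ?V = "\<Pi>\<^sub>E \<beta>\<in>{1..k}. {1..\<alpha>}"
  let ?P = "\<lambda>v. d (card {\<beta>\<in>{1..k}. v \<beta> = 1}) = 1"
  let ?q = "\<Sum>\<beta>=1..k. real (d \<beta>) * real (k choose \<beta>) / real \<alpha> ^ \<beta>"
  have finV: "finite ?V" by (intro finite_PiE) auto
  have cV: "card ?V = \<alpha> ^ k" by (simp add: card_PiE)
  have "(\<Sum>v\<in>?V. exp (if ?P v then 1 else 0)) = (\<Sum>v\<in>?V. 1 + (exp 1 - 1) * (if ?P v then 1 else 0))"
    by (intro sum.cong) auto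
  also have "\<dots> = real (card ?V) + (exp 1 - 1) * real (card {v\<in>?V. ?P v})"
    unfolding real_card_filter[OF finV] by (simp add: sum.distrib sum_distrib_left)
  also have "\<dots> \<le> real \<alpha> ^ k + (exp 1 - 1) * (\<Sum>\<beta>=1..k. real (d \<beta>) * real (k choose \<beta>) * real \<alpha> ^ (k - \<beta>))"
    using count_bound[where d=d and \<alpha>=\<alpha> and k=k, OF d0 a] cV by (intro add_mono mult_left_mono) (auto simp: one_le_exp_iff)
  also have "(\<Sum>\<beta>=1..k. real (d \<beta>) * real (k choose \<beta>) * real \<alpha> ^ (k - \<beta>)) = real \<alpha> ^ k * ?q"
    unfolding sum_distrib_left
  proof (rule sum.cong[OF refl])
    fix \<beta> assume b: "\<beta> \<in> {1..k}"
    have "real \<alpha> ^ (k - \<beta>) = real \<alpha> ^ k / real \<alpha> ^ \<beta>" using a b by (simp add: power_diff)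
    then show "real (d \<beta>) * real (k choose \<beta>) * real \<alpha> ^ (k - \<beta>) = real \<alpha> ^ k * (real (d \<beta>) * real (k choose \<beta>) / real \<alpha> ^ \<beta>)"
      by simp
  qed
  also have "real \<alpha> ^ k + (exp 1 - 1) * (real \<alpha> ^ k * ?q) = real \<alpha> ^ k * (1 + (exp 1 - 1) * ?q)"
    by (simp add: algebra_simps)
  also have "\<dots> \<le> real \<alpha> ^ k * exp ((exp 1 - 1) * ?q)"
    by (intro mult_left_mono) (auto simp: exp_ge_add_one_self)
  finally show ?thesis .
qed

lemma harm_bound:
  assumes n: "n \<ge> 2"
  shows "(\<Sum>\<alpha>=2..n. 1 / real \<alpha>) \<le> ln (real n - 1) + euler_mascheroni"
proof -
  obtain m where m: "n = Suc m" "m \<ge> 1" using n by (cases n) auto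
  have h1: "harm m - ln (real m) \<le> harm 1 - ln (real 1)"
    using euler_mascheroni_sequence_decreasing[of 1 m] m by simp
  have "harm 1 = (1::real)" by (simp add: harm_def)
  then have h2: "harm m \<le> ln (real m) + (1::real)" using h1 by simp
  have "{1..n} = insert 1 {2..n}" using n by auto
  then have "harm n = 1 + (\<Sum>\<alpha>=2..n. 1 / real \<alpha>)"
    by (simp add: harm_def divide_inverse)
  moreover have "harm n = harm m + 1 / real n"
    using m by (simp add: harm_Suc divide_inverse)
  moreover have "1 / real n \<le> 1/2" using n by simp
  moreover have "ln (real n - 1) = ln (real m)" using m by simp
  moreover have "(1/2::real) < euler_mascheroni" using euler_mascheroni_gt_19_over_33 by simp
  ultimately show ?thesis using h2 by linarith
qed

lemma sq_sum_bound:
  assumes "n \<ge> 1"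
  shows "(\<Sum>\<alpha>=2..n. 1 / real \<alpha> ^ 2) \<le> 1 - 1 / real n"
  using assms
proof (induction n rule: nat_induct_at_least)
  case base
  then show ?case by simp
next
  case (Suc m)
  have "{2..Suc m} = insert (Suc m) {2..m}" using Suc.hyps by auto
  then have "(\<Sum>\<alpha>=2..Suc m. 1 / real \<alpha> ^ 2) = 1 / real (Suc m) ^ 2 + (\<Sum>\<alpha>=2..m. 1 / real \<alpha> ^ 2)"
    by simp
  also have "\<dots> \<le> 1 / real (Suc m) ^ 2 + (1 - 1 / real m)" using Suc.IH by simp
  also have "\<dots> \<le> 1 - 1 / real (Suc m)"
  proof -
    have m: "real m \<ge> 1" using Suc.hyps by simp
    have "1 / real (Suc m) ^ 2 \<le> 1 / real m - 1 / real (Suc m)"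
    proof -
      have e: "1 / real m - 1 / real (Suc m) = 1 / (real m * real (Suc m))"
        using m by (simp add: field_simps)
      have "real m * real (Suc m) \<le> real (Suc m) ^ 2" by (simp add: power2_eq_square)
      then have "1 / real (Suc m) ^ 2 \<le> 1 / (real m * real (Suc m))"
        using m by (intro divide_left_mono) auto
      then show ?thesis using e by simp
    qed
    then show ?thesis by simp
  qed
  finally show ?case .
qed

lemma pow_sum_bound:
  assumes "\<beta> \<ge> 2" "n \<ge> 1"
  shows "(\<Sum>\<alpha>=2..n. 1 / real \<alpha> ^ \<beta>) \<le> 1"
proof -
  have "(\<Sum>\<alpha>=2..n. 1 / real \<alpha> ^ \<beta>) \<le> (\<Sum>\<alpha>=2..n. 1 / real \<alpha> ^ 2)"
  proof (rule sum_mono)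
    fix \<alpha> assume a: "\<alpha> \<in> {2..n}"
    have "real \<alpha> ^ 2 \<le> real \<alpha> ^ \<beta>" using a assms by (intro power_increasing) auto
    then show "1 / real \<alpha> ^ \<beta> \<le> 1 / real \<alpha> ^ 2" using a
      by (intro divide_left_mono) auto
  qed
  also have "\<dots> \<le> 1 - 1 / real n" by (rule sq_sum_bound[OF assms(2)])
  also have "\<dots> \<le> 1" by simp
  finally show ?thesis .
qed

definition mu :: "(nat \<Rightarrow> nat) \<Rightarrow> nat \<Rightarrow> nat \<Rightarrow> real" where
  "mu d k n = real k * real (d 1) * (ln (real n - 1) + euler_mascheroni)
     + pi\<^sup>2 / 6 * (\<Sum>\<beta>=2..k. real (d \<beta>) * real (k choose \<beta>))"

lemma mu_nonneg: "n \<ge> 2 \<Longrightarrow> mu d k n \<ge> 0"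
  unfolding mu_def
  using euler_mascheroni_pos by (intro add_nonneg_nonneg mult_nonneg_nonneg sum_nonneg) auto

lemma q_sum_bound:
  assumes k: "k \<ge> 1" and n: "n \<ge> 2"
  shows "(\<Sum>\<alpha>=2..n. \<Sum>\<beta>=1..k. real (d \<beta>) * real (k choose \<beta>) / real \<alpha> ^ \<beta>) \<le> mu d k n"
proof -
  have "(\<Sum>\<alpha>=2..n. \<Sum>\<beta>=1..k. real (d \<beta>) * real (k choose \<beta>) / real \<alpha> ^ \<beta>)
      = (\<Sum>\<beta>=1..k. real (d \<beta>) * real (k choose \<beta>) * (\<Sum>\<alpha>=2..n. 1 / real \<alpha> ^ \<beta>))"
    by (subst sum.swap) (simp add: sum_distrib_left)
  also have "{1..k} = insert 1 {2..k}" using k by auto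
  then have "(\<Sum>\<beta>=1..k. real (d \<beta>) * real (k choose \<beta>) * (\<Sum>\<alpha>=2..n. 1 / real \<alpha> ^ \<beta>))
      = real (d 1) * real k * (\<Sum>\<alpha>=2..n. 1 / real \<alpha>)
        + (\<Sum>\<beta>=2..k. real (d \<beta>) * real (k choose \<beta>) * (\<Sum>\<alpha>=2..n. 1 / real \<alpha> ^ \<beta>))"
    by simp
  also have "\<dots> \<le> real (d 1) * real k * (ln (real n - 1) + euler_mascheroni)
        + (\<Sum>\<beta>=2..k. real (d \<beta>) * real (k choose \<beta>) * (pi\<^sup>2 / 6))"
  proof (rule add_mono)
    show "real (d 1) * real k * (\<Sum>\<alpha>=2..n. 1 / real \<alpha>) \<le> real (d 1) * real k * (ln (real n - 1) + euler_mascheroni)"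
      using harm_bound[OF n] by (intro mult_left_mono) auto
    have pi6: "1 \<le> pi\<^sup>2 / 6"
    proof -
      have "3 * 3 \<le> pi * pi" using pi_gt3 by (intro mult_mono) auto
      then show ?thesis by (simp add: power2_eq_square)
    qed
    show "(\<Sum>\<beta>=2..k. real (d \<beta>) * real (k choose \<beta>) * (\<Sum>\<alpha>=2..n. 1 / real \<alpha> ^ \<beta>))
        \<le> (\<Sum>\<beta>=2..k. real (d \<beta>) * real (k choose \<beta>) * (pi\<^sup>2 / 6))"
    proof (rule sum_mono)
      fix \<beta> assume b: "\<beta> \<in> {2..k}"
      have "(\<Sum>\<alpha>=2..n. 1 / real \<alpha> ^ \<beta>) \<le> pi\<^sup>2 / 6"
        using pow_sum_bound[of \<beta> n] b n pi6 by auto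
      then show "real (d \<beta>) * real (k choose \<beta>) * (\<Sum>\<alpha>=2..n. 1 / real \<alpha> ^ \<beta>)
          \<le> real (d \<beta>) * real (k choose \<beta>) * (pi\<^sup>2 / 6)"
        by (intro mult_left_mono) auto
    qed
  qed
  also have "\<dots> = mu d k n" unfolding mu_def
    by (simp add: sum_distrib_left sum_distrib_right mult_ac)
  finally show ?thesis .
qed

lemma core:
  fixes d :: "nat \<Rightarrow> nat" and M :: real
  assumes d0: "d 0 = 0" and k: "k \<ge> 1" and n: "n \<ge> 2"
  shows "real (card {P\<in>perm_tuples k n. M \<le> real (card {\<alpha>\<in>{2..n}. d (rec_count k P \<alpha>) = 1})})
     \<le> real (fact n) ^ k * exp (exp 1 * mu d k n - M)"
proof -
  define h where "h j = exp (if d j = 1 then 1 else (0::real))" for j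
  define q where "q \<alpha> = (\<Sum>\<beta>=1..k. real (d \<beta>) * real (k choose \<beta>) / real \<alpha> ^ \<beta>)" for \<alpha> :: nat
  define B where "B \<alpha> = exp ((exp 1 - 1) * q \<alpha>)" for \<alpha>
  let ?Z = "\<lambda>P. real (card {\<alpha>\<in>{2..n}. d (rec_count k P \<alpha>) = 1})"
  let ?A = "{P\<in>perm_tuples k n. M \<le> ?Z P}"
  have expZ: "exp (?Z P) = (\<Prod>\<alpha>\<in>{2..n}. h (rec_count k P \<alpha>))" for P
    unfolding real_card_filter[OF finite_atLeastAtMost] h_def by (simp add: exp_sum)
  have S: "(\<Sum>P\<in>perm_tuples k n. \<Prod>\<alpha>\<in>{2..n}. h (rec_count k P \<alpha>))
          \<le> real (fact n) ^ k * (\<Prod>\<alpha>\<in>{2..n}. B \<alpha>)"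
  proof (rule main_sum)
    show "1 \<le> n" using n by simp
    show "0 \<le> h j" for j unfolding h_def by simp
    fix \<alpha> :: nat assume a: "2 \<le> \<alpha>"
    show "(\<Sum>v\<in>(\<Pi>\<^sub>E \<beta>\<in>{1..k}. {1..\<alpha>}). h (card {\<beta>\<in>{1..k}. v \<beta> = 1})) \<le> real \<alpha> ^ k * B \<alpha>"
      unfolding h_def B_def q_def using pos_bound[of d \<alpha> k] d0 a by simp
  qed
  have "(\<Prod>\<alpha>\<in>{2..n}. B \<alpha>) = exp ((exp 1 - 1) * (\<Sum>\<alpha>=2..n. q \<alpha>))"
    unfolding B_def by (simp add: exp_sum sum_distrib_left)
  also have "\<dots> \<le> exp (exp 1 * mu d k n)"
  proof -
    have "(\<Sum>\<alpha>=2..n. q \<alpha>) \<le> mu d k n" unfolding q_def by (rule q_sum_bound[OF k n])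
    moreover have "exp 1 - 1 \<ge> (0::real)" by (simp add: one_le_exp_iff)
    ultimately have "(exp 1 - 1) * (\<Sum>\<alpha>=2..n. q \<alpha>) \<le> (exp 1 - 1) * mu d k n"
      by (intro mult_left_mono)
    also have "\<dots> \<le> exp 1 * mu d k n" using mu_nonneg[OF n, of d k] by (simp add: algebra_simps)
    finally show ?thesis by simp
  qed
  finally have PB: "(\<Prod>\<alpha>\<in>{2..n}. B \<alpha>) \<le> exp (exp 1 * mu d k n)" .
  have finPT: "finite (perm_tuples k n)" by (rule finite_PT)
  have "real (card ?A) * exp M = (\<Sum>P\<in>?A. exp M)" by simp
  also have "\<dots> \<le> (\<Sum>P\<in>?A. exp (?Z P))" by (intro sum_mono) auto
  also have "\<dots> \<le> (\<Sum>P\<in>perm_tuples k n. exp (?Z P))"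
    using finPT by (intro sum_mono2) auto
  also have "\<dots> = (\<Sum>P\<in>perm_tuples k n. \<Prod>\<alpha>\<in>{2..n}. h (rec_count k P \<alpha>))"
    using expZ by simp
  also have "\<dots> \<le> real (fact n) ^ k * exp (exp 1 * mu d k n)"
    using S PB by (smt (verit) mult_left_mono of_nat_0_le_iff zero_le_power)
  finally have "real (card ?A) * exp M \<le> real (fact n) ^ k * exp (exp 1 * mu d k n)" .
  then have "real (card ?A) \<le> real (fact n) ^ k * exp (exp 1 * mu d k n) / exp M"
    by (simp add: field_simps)
  also have "\<dots> = real (fact n) ^ k * exp (exp 1 * mu d k n - M)"
    by (simp add: exp_diff)
  finally show ?thesis .
qed

lemma rec1: "rec_count k P 1 = k"
proof -
  have "{\<beta>\<in>{1..k}. is_record (P \<beta>) 1} = {1..k}" by (auto simp: is_record_def)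
  then show ?thesis unfolding rec_count_def by simp
qed

lemma rec_le: "rec_count k P \<alpha> \<le> k"
proof -
  have "card {\<beta>\<in>{1..k}. is_record (P \<beta>) \<alpha>} \<le> card {1..k}" by (intro card_mono) auto
  then show ?thesis unfolding rec_count_def by simp
qed

lemma weight_split:
  assumes n: "n \<ge> 1"
  shows "weight c k n P = (if c k = 1 then 1 else 0) + card {\<alpha>\<in>{2..n}. c (rec_count k P \<alpha>) = 1}"
proof -
  let ?X = "{\<alpha>\<in>{2..n}. c (rec_count k P \<alpha>) = 1}"
  have "{1..n} = insert 1 {2..n}" using n by auto
  then have eq: "seq_opt_set c k n P = (if c k = 1 then insert 1 ?X else ?X)"
    unfolding seq_opt_set_def using rec1[of k P] by auto
  have "1 \<notin> ?X" by auto
  moreover have "finite ?X" by simp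
  ultimately show ?thesis unfolding weight_def eq by simp
qed

lemma final_bound:
  fixes d :: "nat \<Rightarrow> nat" and M :: int and I :: "int set"
  assumes d0: "d 0 = 0" and k: "k \<ge> 1" and n: "n \<ge> 2"
    and M: "M = \<lceil>exp 1 * k * d 1 * (ln (real n - 1) + euler_mascheroni)
               + exp 1 * pi\<^sup>2 / 6 * (\<Sum>\<beta>=2..k. real (d \<beta>) * real (k choose \<beta>))\<rceil> + int M1"
    and I: "finite I"
    and imp: "\<And>m P. m \<in> I \<Longrightarrow> P \<in> perm_tuples k n \<Longrightarrow> int (weight c k n P) = m + int (c k) - 1 \<Longrightarrow>
        real_of_int M \<le> real (card {\<alpha>\<in>{2..n}. d (rec_count k P \<alpha>) = 1})"
  shows "(\<Sum>m\<in>I. P_O c k n (m + int (c k) - 1)) \<le> exp (- real M1)"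
proof -
  define A where "A m = {P\<in>perm_tuples k n. int (weight c k n P) = m + int (c k) - 1}" for m
  let ?Z = "\<lambda>P. real (card {\<alpha>\<in>{2..n}. d (rec_count k P \<alpha>) = 1})"
  have fpos: "real (fact n) ^ k > 0" by simp
  have "(\<Sum>m\<in>I. P_O c k n (m + int (c k) - 1)) = (\<Sum>m\<in>I. real (card (A m))) / real (fact n) ^ k"
    unfolding P_O_def O_C_def A_def by (simp add: sum_divide_distrib)
  also have "(\<Sum>m\<in>I. real (card (A m))) = real (card (\<Union>m\<in>I. A m))"
  proof -
    have "card (\<Union>m\<in>I. A m) = (\<Sum>m\<in>I. card (A m))"
      using I finite_PT by (intro card_UN_disjoint) (auto simp: A_def)
    then show ?thesis by simp
  qed
  also have "real (card (\<Union>m\<in>I. A m)) \<le> real (card {P\<in>perm_tuples k n. real_of_int M \<le> ?Z P})"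
  proof -
    have "(\<Union>m\<in>I. A m) \<subseteq> {P\<in>perm_tuples k n. real_of_int M \<le> ?Z P}"
      using imp unfolding A_def by blast
    then show ?thesis using finite_PT by (simp add: card_mono)
  qed
  also have "\<dots> \<le> real (fact n) ^ k * exp (exp 1 * mu d k n - real_of_int M)"
    by (rule core[where d=d and k=k and n=n and M="real_of_int M", OF d0 k n])
  finally have "(\<Sum>m\<in>I. P_O c k n (m + int (c k) - 1)) \<le> exp (exp 1 * mu d k n - real_of_int M)"
    using fpos by (simp add: divide_right_mono field_simps)
  also have "\<dots> \<le> exp (- real M1)"
  proof -
    have "exp 1 * mu d k n = exp 1 * k * d 1 * (ln (real n - 1) + euler_mascheroni)
               + exp 1 * pi\<^sup>2 / 6 * (\<Sum>\<beta>=2..k. real (d \<beta>) * real (k choose \<beta>))"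
      unfolding mu_def by (simp add: algebra_simps)
    then have "exp 1 * mu d k n + real M1 \<le> real_of_int M"
      unfolding M using ceiling_correct by (metis add_mono_thms_linordered_semiring(3) of_int_add of_int_of_nat_eq)
    then show ?thesis by simp
  qed
  finally show ?thesis .
qed

lemma card_compl:
  assumes "finite A"
  shows "card {x\<in>A. P x} + card {x\<in>A. \<not> P x} = card A"
proof -
  have "{x\<in>A. P x} \<union> {x\<in>A. \<not> P x} = A" by auto
  moreover have "card ({x\<in>A. P x} \<union> {x\<in>A. \<not> P x}) = card {x\<in>A. P x} + card {x\<in>A. \<not> P x}"
    using assms by (intro card_Un_disjoint) auto
  ultimately show ?thesis by simp
qed

theorem theorem5p2:
  fixes n k M1 :: nat and c :: "nat \<Rightarrow> nat"
  assumes "n \<ge> 2" and "k \<ge> 1" and "M1 \<ge> 1"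
    and "\<forall>i\<le>k. c i \<in> {0, 1}"
  shows "(c 0 = 0 \<longrightarrow>
      (let M = \<lceil>exp 1 * k * c 1 * (ln (real n - 1) + euler_mascheroni)
               + exp 1 * pi\<^sup>2 / 6 * (\<Sum>\<beta>=2..k. real (c \<beta>) * real (k choose \<beta>))\<rceil> + int M1
       in (\<Sum>m\<in>{M+1..int n}. P_O c k n (m + int (c k) - 1)) \<le> exp (- real M1)))
    \<and> (c 0 = 1 \<longrightarrow>
      (let c' = (\<lambda>i. 1 - c i);
           M' = \<lceil>exp 1 * k * c' 1 * (ln (real n - 1) + euler_mascheroni)
               + exp 1 * pi\<^sup>2 / 6 * (\<Sum>\<beta>=2..k. real (c' \<beta>) * real (k choose \<beta>))\<rceil> + int M1
       in (\<Sum>m\<in>{m. 1 \<le> m \<and> m < int n + 1 - M'}. P_O c k n (m + int (c k) - 1)) \<le> exp (- real M1)))"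
proof (intro conjI impI)
  have n1: "n \<ge> 1" using assms(1) by simp
  have ck: "(if c k = 1 then 1 else 0) = c k" using assms(4) by auto
  have wsplit: "int (weight c k n P) = int (c k) + int (card {\<alpha>\<in>{2..n}. c (rec_count k P \<alpha>) = 1})" for P
    using weight_split[OF n1, of c k P] ck by simp
  {
    assume c0: "c 0 = 0"
    define M where "M = \<lceil>exp 1 * k * c 1 * (ln (real n - 1) + euler_mascheroni)
               + exp 1 * pi\<^sup>2 / 6 * (\<Sum>\<beta>=2..k. real (c \<beta>) * real (k choose \<beta>))\<rceil> + int M1"
    have "(\<Sum>m\<in>{M+1..int n}. P_O c k n (m + int (c k) - 1)) \<le> exp (- real M1)"
    proof (rule final_bound[OF c0 assms(2) assms(1) M_def])
      show "finite {M+1..int n}" by simp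
      fix m P assume m: "m \<in> {M+1..int n}" and P: "P \<in> perm_tuples k n"
        and w: "int (weight c k n P) = m + int (c k) - 1"
      show "real_of_int M \<le> real (card {\<alpha>\<in>{2..n}. c (rec_count k P \<alpha>) = 1})"
        using m w wsplit[of P] by simp
    qed
    then show "let M = \<lceil>exp 1 * k * c 1 * (ln (real n - 1) + euler_mascheroni)
               + exp 1 * pi\<^sup>2 / 6 * (\<Sum>\<beta>=2..k. real (c \<beta>) * real (k choose \<beta>))\<rceil> + int M1
       in (\<Sum>m\<in>{M+1..int n}. P_O c k n (m + int (c k) - 1)) \<le> exp (- real M1)"
      unfolding M_def Let_def .
  }
  {
    assume c0: "c 0 = 1"
    define d where "d = (\<lambda>i. 1 - c i)"
    have d0: "d 0 = 0" using c0 by (simp add: d_def)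
    define M where "M = \<lceil>exp 1 * k * d 1 * (ln (real n - 1) + euler_mascheroni)
               + exp 1 * pi\<^sup>2 / 6 * (\<Sum>\<beta>=2..k. real (d \<beta>) * real (k choose \<beta>))\<rceil> + int M1"
    have "(\<Sum>m\<in>{m. 1 \<le> m \<and> m < int n + 1 - M}. P_O c k n (m + int (c k) - 1)) \<le> exp (- real M1)"
    proof (rule final_bound[OF d0 assms(2) assms(1) M_def])
      show "finite {m. 1 \<le> m \<and> m < int n + 1 - M}"
        by (rule finite_subset[of _ "{1..int n + 1 - M}"]) auto
      fix m P assume m: "m \<in> {m. 1 \<le> m \<and> m < int n + 1 - M}" and P: "P \<in> perm_tuples k n"
        and w: "int (weight c k n P) = m + int (c k) - 1"
      have eqs: "{\<alpha>\<in>{2..n}. d (rec_count k P \<alpha>) = 1} = {\<alpha>\<in>{2..n}. \<not> c (rec_count k P \<alpha>) = 1}"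
      proof -
        have "d (rec_count k P \<alpha>) = 1 \<longleftrightarrow> \<not> c (rec_count k P \<alpha>) = 1" for \<alpha>
          using assms(4) rec_le[of k P \<alpha>] unfolding d_def by force
        then show ?thesis by simp
      qed
      have "card {\<alpha>\<in>{2..n}. c (rec_count k P \<alpha>) = 1} + card {\<alpha>\<in>{2..n}. \<not> c (rec_count k P \<alpha>) = 1} = n - 1"
        using card_compl[of "{2..n}" "\<lambda>\<alpha>. c (rec_count k P \<alpha>) = 1"] by simp
      then show "real_of_int M \<le> real (card {\<alpha>\<in>{2..n}. d (rec_count k P \<alpha>) = 1})"
        unfolding eqs using m w wsplit[of P] n1 by simp
    qed
    then show "let c' = (\<lambda>i. 1 - c i);
           M' = \<lceil>exp 1 * k * c' 1 * (ln (real n - 1) + euler_mascheroni)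
               + exp 1 * pi\<^sup>2 / 6 * (\<Sum>\<beta>=2..k. real (c' \<beta>) * real (k choose \<beta>))\<rceil> + int M1
       in (\<Sum>m\<in>{m. 1 \<le> m \<and> m < int n + 1 - M'}. P_O c k n (m + int (c k) - 1)) \<le> exp (- real M1)"
      unfolding M_def d_def Let_def .
  }
qed

end
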